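(* Let $\mathcal S=(\mathcal P,\mathcal L)$ be a linear space with $v$ points and constant line size $k$, $2<k<v$, let $G\le\mathrm{Aut}(\mathcal S)$ be transitive on lines, and let $\mathfrak C$ be a non-trivial $G$-invariant partition of $\mathcal P$ with $d$ classes of size $c$. Then (i) $|\mathrm{spec}\,\mathcal S|\ge 2$; (ii) $c\notin\mathrm{spec}\,\mathcal S$; (iii) if $\mathrm{spec}\,\mathcal S=\{1,h\}$ with $h\ge 2$, then for each class $C\in\mathfrak C$ the induced linear space $\mathcal S|_C$ has constant line size $h$.
   Context: A linear space $\mathcal S=(\mathcal P,\mathcal L)$: a finite set $\mathcal P$ of points and a set $\mathcal L$ of subsets (lines) such that any two distinct points lie on exactly one line and each line has at least two points. Line-transitivity of $G$ implies point-transitivity. A partition is non-trivial if it has more than one class and its classes have more than one element; $G$-invariant means $G$ permutes the classes. For a line $\lambda$ and $i\ge0$, let $d_i$ be the number of classes $C\in\mathfrak C$ with $|C\cap\lambda|=i$ (independent of $\lambda$ by line-transitivity); $\mathrm{spec}\,\mathcal S=\{i>0: d_i\ne0\}$. For $F\subseteq\mathcal P$ with $|F|\ge2$, the induced linear space is $\mathcal S|_F=(F,\{\lambda\cap F:\lambda\in\mathcal L,\ |\lambda\cap F|\ge2\})$. *)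

theory Defs
  imports Main "HOL-Library.Disjoint_Sets"
begin

definition linear_space :: "'a set \<Rightarrow> 'a set set \<Rightarrow> bool" where
  "linear_space P L \<longleftrightarrow> finite P \<and>
     (\<forall>l\<in>L. l \<subseteq> P \<and> card l \<ge> 2) \<and>
     (\<forall>x\<in>P. \<forall>y\<in>P. x \<noteq> y \<longrightarrow> (\<exists>!l. l \<in> L \<and> x \<in> l \<and> y \<in> l))"

definition automorphism :: "'a set \<Rightarrow> 'a set set \<Rightarrow> ('a \<Rightarrow> 'a) \<Rightarrow> bool" where
  "automorphism P L g \<longleftrightarrow> bij_betw g P P \<and> (\<forall>x. x \<notin> P \<longrightarrow> g x = x) \<and>
     (\<lambda>l. g ` l) ` L = L"

definition aut_subgroup :: "'a set \<Rightarrow> 'a set set \<Rightarrow> ('a \<Rightarrow> 'a) set \<Rightarrow> bool" where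
  "aut_subgroup P L G \<longleftrightarrow> (\<forall>g\<in>G. automorphism P L g) \<and> id \<in> G \<and>
     (\<forall>g\<in>G. \<forall>h\<in>G. g \<circ> h \<in> G) \<and> (\<forall>g\<in>G. inv g \<in> G)"

definition line_transitive :: "'a set set \<Rightarrow> ('a \<Rightarrow> 'a) set \<Rightarrow> bool" where
  "line_transitive L G \<longleftrightarrow> (\<forall>l1\<in>L. \<forall>l2\<in>L. \<exists>g\<in>G. g ` l1 = l2)"

definition G_invariant :: "('a \<Rightarrow> 'a) set \<Rightarrow> 'a set set \<Rightarrow> bool" where
  "G_invariant G \<C> \<longleftrightarrow> (\<forall>g\<in>G. \<forall>C\<in>\<C>. g ` C \<in> \<C>)"

definition nontrivial_partition :: "'a set \<Rightarrow> 'a set set \<Rightarrow> bool" where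
  "nontrivial_partition P \<C> \<longleftrightarrow> partition_on P \<C> \<and> card \<C> > 1 \<and> (\<forall>C\<in>\<C>. card C > 1)"

definition dcount :: "'a set set \<Rightarrow> 'a set \<Rightarrow> nat \<Rightarrow> nat" where
  "dcount \<C> l i = card {C\<in>\<C>. card (C \<inter> l) = i}"

definition spec :: "'a set set \<Rightarrow> 'a set set \<Rightarrow> nat set" where
  "spec L \<C> = {i. i > 0 \<and> (\<exists>l\<in>L. dcount \<C> l i \<noteq> 0)}"

definition induced_lines :: "'a set set \<Rightarrow> 'a set \<Rightarrow> 'a set set" where
  "induced_lines L F = {l \<inter> F | l. l \<in> L \<and> card (l \<inter> F) \<ge> 2}"

end

theory Submission
  imports Defs
begin


lemma ls_fin: "linear_space P L \<Longrightarrow> finite P" by (simp add: linear_space_def)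
lemma ls_sub: "linear_space P L \<Longrightarrow> l \<in> L \<Longrightarrow> l \<subseteq> P" by (simp add: linear_space_def)
lemma ls_finL: "linear_space P L \<Longrightarrow> finite L"
  by (metis (no_types, lifting) Pow_iff finite_Pow_iff finite_subset ls_fin ls_sub subsetI)
lemma ls_ex: "linear_space P L \<Longrightarrow> x \<in> P \<Longrightarrow> y \<in> P \<Longrightarrow> x \<noteq> y \<Longrightarrow> \<exists>l\<in>L. x \<in> l \<and> y \<in> l"
  unfolding linear_space_def by blast
lemma ls_uniq: "linear_space P L \<Longrightarrow> l1 \<in> L \<Longrightarrow> l2 \<in> L \<Longrightarrow> x \<in> l1 \<Longrightarrow> y \<in> l1 \<Longrightarrow> x \<in> l2 \<Longrightarrow> y \<in> l2 \<Longrightarrow> x \<noteq> y \<Longrightarrow> l1 = l2"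
proof -
  assume a: "linear_space P L" "l1 \<in> L" "l2 \<in> L" "x \<in> l1" "y \<in> l1" "x \<in> l2" "y \<in> l2" "x \<noteq> y"
  then have "x \<in> P" "y \<in> P" using ls_sub by blast+
  then have "\<exists>!l. l \<in> L \<and> x \<in> l \<and> y \<in> l" using a unfolding linear_space_def by blast
  then show ?thesis using a by blast
qed

lemma ls_count:
  assumes ls: "linear_space P L" and S: "S \<subseteq> P" and x: "x \<in> S"
  shows "card S - 1 = (\<Sum>l\<in>{l\<in>L. x\<in>l}. card (l \<inter> S) - 1)"
proof -
  have fS: "finite S" using S ls_fin[OF ls] finite_subset by blast
  have eq: "S - {x} = (\<Union>l\<in>{l\<in>L. x\<in>l}. l \<inter> S - {x})"
  proof
    show "S - {x} \<subseteq> (\<Union>l\<in>{l\<in>L. x\<in>l}. l \<inter> S - {x})"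
    proof
      fix y assume y: "y \<in> S - {x}"
      then obtain l where "l \<in> L" "x \<in> l" "y \<in> l" using ls_ex[OF ls, of x y] S x by blast
      then show "y \<in> (\<Union>l\<in>{l\<in>L. x\<in>l}. l \<inter> S - {x})" using y by blast
    qed
  qed blast
  have "card (S - {x}) = (\<Sum>l\<in>{l\<in>L. x\<in>l}. card (l \<inter> S - {x}))"
    unfolding eq
    apply (rule card_UN_disjoint)
    using ls_finL[OF ls] fS apply auto
    by (metis ls ls_uniq)+
  moreover have "card (l \<inter> S - {x}) = card (l \<inter> S) - 1" if "x \<in> l" for l
    using that x fS by (simp add: card_Diff_singleton)
  ultimately show ?thesis using fS x by (simp add: card_Diff_singleton)
qed

lemma ls_rk:
  assumes ls: "linear_space P L" and l: "l \<in> L" and y: "y \<in> P" "y \<notin> l"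
  shows "card l \<le> card {m\<in>L. y\<in>m}"
proof -
  define f where "f z = (SOME m. m \<in> L \<and> y \<in> m \<and> z \<in> m)" for z
  have fz: "f z \<in> L \<and> y \<in> f z \<and> z \<in> f z" if "z \<in> l" for z
  proof -
    have "\<exists>m. m \<in> L \<and> y \<in> m \<and> z \<in> m" using ls_ex[OF ls, of y z] that y ls_sub[OF ls l] by blast
    then show ?thesis unfolding f_def by (rule someI_ex)
  qed
  have "inj_on f l"
  proof
    fix a b assume a: "a \<in> l" and b: "b \<in> l" and e: "f a = f b"
    show "a = b"
    proof (rule ccontr)
      assume "a \<noteq> b"
      then have "f a = l" using ls_uniq[OF ls, of "f a" l a b] fz[OF a] fz[OF b] e a b l by auto
      then show False using fz[OF a] y by auto
    qed
  qed
  moreover have "f ` l \<subseteq> {m\<in>L. y\<in>m}" using fz by auto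
  moreover have "finite {m\<in>L. y\<in>m}" using ls_finL[OF ls] by auto
  ultimately show ?thesis using card_inj_on_le by blast
qed

lemma part_card:
  assumes "partition_on P C" "\<forall>X\<in>C. card X = c" "finite P"
  shows "card P = card C * c"
proof -
  have P: "P = \<Union>C" using partition_onD1[OF assms(1)] .
  have fin: "\<And>A. A \<in> C \<Longrightarrow> finite A" using P assms(3) by (metis Union_upper finite_subset)
  have "card (\<Union>C) = sum card C"
    by (rule card_Union_disjoint[OF partition_onD2[OF assms(1)]]) (use fin in auto)
  also have "\<dots> = card C * c" using assms(2) by simp
  finally show ?thesis using P by simp
qed

lemma flags:
  assumes ls: "linear_space P L"
  shows "(\<Sum>l\<in>L. card l) = (\<Sum>x\<in>P. card {l\<in>L. x\<in>l})"
proof -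
  have fP: "finite P" and fL: "finite L" using ls ls_fin ls_finL by auto
  have "(\<Sum>l\<in>L. card l) = (\<Sum>l\<in>L. \<Sum>x\<in>P. if x \<in> l then 1 else 0)"
  proof (rule sum.cong[OF refl])
    fix l assume "l \<in> L"
    then have "l \<subseteq> P" using ls_sub[OF ls] by auto
    then have "P \<inter> {x. x \<in> l} = l" by auto
    then show "card l = (\<Sum>x\<in>P. if x \<in> l then 1 else 0)"
      using fP by (simp add: sum.If_cases)
  qed
  also have "\<dots> = (\<Sum>x\<in>P. \<Sum>l\<in>L. if x \<in> l then 1 else 0)" by (rule sum.swap)
  also have "\<dots> = (\<Sum>x\<in>P. card {l\<in>L. x\<in>l})"
    using fL by (simp add: sum.If_cases Int_def)
  finally show ?thesis .
qed

lemma arith1: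
  fixes v r k c i d :: nat
  assumes h1: "v - 1 = r*(k-1)" and h2: "c - 1 = r*(i-1)" and h3: "v = d*c" and h4: "k \<le> r"
    and h5: "2 \<le> i" and h6: "i < k" and h7: "2 \<le> c"
  shows False
proof -
  have "r*(k-1) > 0" using h4 h5 h6 by simp
  then have v1: "v \<ge> 1" using h1 by linarith
  define a where "a = int k - 1"
  define b where "b = int i - 1"
  have A: "int v - 1 = int r * a"
  proof -
    have "int (v - 1) = int r * int (k - 1)" using h1 by simp
    moreover have "int (v - 1) = int v - 1" using v1 by (simp add: of_nat_diff)
    moreover have "int (k - 1) = int k - 1" using h6 by (simp add: of_nat_diff)
    ultimately show ?thesis unfolding a_def by simp
  qed
  have B: "int c - 1 = int r * b"
  proof -
    have "int (c - 1) = int r * int (i - 1)" using h2 by simp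
    moreover have "int (c - 1) = int c - 1" using h7 by (simp add: of_nat_diff)
    moreover have "int (i - 1) = int i - 1" using h5 by (simp add: of_nat_diff)
    ultimately show ?thesis unfolding b_def by simp
  qed
  have C: "int v = int d * int c" using h3 by simp
  have D: "int c * (a - b * int d) = a - b"
  proof -
    have "a * (int c - 1) = b * (int v - 1)" using A B by (simp add: algebra_simps)
    then show ?thesis using C by (simp add: algebra_simps)
  qed
  have ab: "a - b > 0" unfolding a_def b_def using h6 by simp
  have cpos: "int c > 0" using h7 by simp
  have "int c * (a - b * int d) > 0" using D ab by simp
  then have X: "a - b * int d \<ge> 1" using zero_less_mult_pos[OF _ cpos] by fastforce
  have "int c * 1 \<le> int c * (a - b * int d)" by (rule mult_left_mono[OF X]) simp
  then have "int c \<le> a - b" using D by simp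
  moreover have "int c - 1 \<ge> int r"
  proof -
    have "int r * 1 \<le> int r * b" by (rule mult_left_mono) (use h5 in \<open>simp_all add: b_def\<close>)
    then show ?thesis using B by simp
  qed
  ultimately show False using h4 unfolding a_def b_def using h5 by linarith
qed


lemma two_elems: "1 < card A \<Longrightarrow> \<exists>x y. x \<in> A \<and> y \<in> A \<and> x \<noteq> y"
proof -
  assume a: "1 < card A"
  then have f: "finite A" using card.infinite by fastforce
  obtain x where x: "x \<in> A" using a by fastforce
  have "card (A - {x}) > 0" using a f x by simp
  then have "A - {x} \<noteq> {}" by (metis card.empty less_irrefl)
  then obtain y where "y \<in> A - {x}" by blast
  then show ?thesis using x by blast
qed

lemma in_spec:
  assumes "finite CC" "C \<in> CC" "l \<in> L" "card (C \<inter> l) > 0"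
  shows "card (C \<inter> l) \<in> spec L CC"
proof -
  have "C \<in> {D\<in>CC. card (D \<inter> l) = card (C \<inter> l)}" using assms by simp
  then have "dcount CC l (card (C \<inter> l)) \<noteq> 0" unfolding dcount_def using assms(1)
    by (metis (no_types, lifting) card_0_eq empty_iff finite_subset mem_Collect_eq subsetI)
  then show ?thesis unfolding spec_def using assms by auto
qed

lemma spec_D:
  assumes "i \<in> spec L CC"
  shows "\<exists>l\<in>L. \<exists>C\<in>CC. card (C \<inter> l) = i \<and> i > 0"
proof -
  obtain l where l: "l \<in> L" "dcount CC l i \<noteq> 0" "i > 0" using assms unfolding spec_def by auto
  then have "{C\<in>CC. card (C \<inter> l) = i} \<noteq> {}" unfolding dcount_def by (metis card.empty)
  then show ?thesis using l by auto
qed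

theorem theorem4p2:
  fixes P :: "'a set" and L :: "'a set set" and G :: "('a \<Rightarrow> 'a) set"
    and \<C> :: "'a set set" and v k c d :: nat
  assumes "linear_space P L"
    and "card P = v"
    and "\<forall>l\<in>L. card l = k"
    and "2 < k" and "k < v"
    and "aut_subgroup P L G"
    and "line_transitive L G"
    and "nontrivial_partition P \<C>"
    and "G_invariant G \<C>"
    and "card \<C> = d"
    and "\<forall>C\<in>\<C>. card C = c"
  shows "card (spec L \<C>) \<ge> 2 \<and> c \<notin> spec L \<C> \<and>
         (\<forall>h. h \<ge> 2 \<and> spec L \<C> = {1, h} \<longrightarrow>
            (\<forall>C\<in>\<C>. \<forall>m\<in>induced_lines L C. card m = h))"
proof -
  note ls = assms(1)
  have part: "partition_on P \<C>" and cC: "card \<C> > 1" and cX: "\<forall>C\<in>\<C>. card C > 1"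
    using assms(8) unfolding nontrivial_partition_def by auto
  have PU: "P = \<Union>\<C>" using partition_onD1[OF part] .
  have fP: "finite P" using ls_fin[OF ls] .
  have fC: "finite \<C>" using PU fP by (metis finite_UnionD)
  have CsubP: "C \<subseteq> P" if "C \<in> \<C>" for C using PU that by auto
  have finC: "finite C" if "C \<in> \<C>" for C using CsubP[OF that] fP finite_subset by blast
  have disj: "C \<inter> D = {}" if "C \<in> \<C>" "D \<in> \<C>" "C \<noteq> D" for C D
    using partition_onD2[OF part] that unfolding disjoint_def disjnt_def by blast
  have c2: "c \<ge> 2" using cX assms(11) cC fC
    by (metis One_nat_def Suc_le_eq card.empty ex_in_conv less_nat_zero_code numeral_2_eq_2)
  obtain C0 where C0: "C0 \<in> \<C>" using cC by (metis card.empty ex_in_conv less_nat_zero_code)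
  obtain x0 y0 where xy0: "x0 \<in> C0" "y0 \<in> C0" "x0 \<noteq> y0"
    using two_elems[of C0] cX C0 by blast
  obtain l0 where l0: "l0 \<in> L" "x0 \<in> l0" "y0 \<in> l0" using ls_ex[OF ls, of x0 y0] xy0 CsubP[OF C0] by auto
  have vd: "v = d * c" using part_card[OF part assms(11) fP] assms(2,10) by simp
  have finl: "finite l" if "l \<in> L" for l using ls_sub[OF ls that] fP finite_subset by blast
  have rx: "v - 1 = card {l\<in>L. x\<in>l} * (k - 1)" if "x \<in> P" for x
    using ls_count[OF ls order.refl that] assms(2,3) ls_sub[OF ls]
    by (simp add: Int_absorb2)
  obtain z where z: "z \<in> P" "z \<notin> l0"
  proof -
    have "card l0 < card P" using assms(2,3,5) l0 by simp
    then have "\<not> P \<subseteq> l0" using finl[OF l0(1)] by (meson card_mono not_le)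
    then show ?thesis using that by blast
  qed
  define r where "r = card {l\<in>L. z\<in>l}"
  have rk: "k \<le> r" using ls_rk[OF ls l0(1) z] assms(3) l0 unfolding r_def by simp
  have rall: "card {l\<in>L. x\<in>l} = r" if "x \<in> P" for x
    using rx[OF that] rx[OF z(1)] assms(4) unfolding r_def by simp
  have vr: "v - 1 = r * (k - 1)" using rx[OF z(1)] r_def by simp
  have P1: "card (spec L \<C>) \<ge> 2"
  proof (rule ccontr)
    assume "\<not> ?thesis"
    then have le1: "card (spec L \<C>) \<le> 1" by simp
    define i where "i = card (C0 \<inter> l0)"
    have i2: "i \<ge> 2"
    proof -
      have "{x0, y0} \<subseteq> C0 \<inter> l0" using xy0 l0 by auto
      then have "card {x0,y0} \<le> card (C0 \<inter> l0)" using finC[OF C0] by (meson card_mono finite_Int)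
      then show ?thesis using xy0 unfolding i_def by simp
    qed
    have iS: "i \<in> spec L \<C>" unfolding i_def using in_spec[OF fC C0 l0(1)] i2 unfolding i_def by simp
    have finS: "finite (spec L \<C>)"
    proof (rule finite_subset[of _ "{..v}"])
      show "spec L \<C> \<subseteq> {..v}"
      proof
        fix j assume "j \<in> spec L \<C>"
        then obtain l C where "l \<in> L" "C \<in> \<C>" "card (C \<inter> l) = j" using spec_D by blast
        then show "j \<in> {..v}" using CsubP assms(2) fP
          by (metis atMost_iff card_mono inf.coboundedI1)
      qed
    qed simp
    have Seq: "spec L \<C> = {i}" using le1 iS finS by (metis card_le_Suc0_iff_eq singletonD subsetI subset_antisym insertI1 insert_subset One_nat_def is_singletonI' is_singleton_the_elem)
    have all_i: "card (D \<inter> l) = i" if "D \<in> \<C>" "l \<in> L" "D \<inter> l \<noteq> {}" for D l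
    proof -
      have "card (D \<inter> l) > 0" using that finC by (simp add: card_gt_0_iff)
      then have "card (D \<inter> l) \<in> spec L \<C>" using in_spec[OF fC that(1,2)] by simp
      then show ?thesis using Seq by simp
    qed
    have cr: "c - 1 = r * (i - 1)"
    proof -
      have "card C0 - 1 = (\<Sum>l\<in>{l\<in>L. x0\<in>l}. card (l \<inter> C0) - 1)"
        using ls_count[OF ls CsubP[OF C0] xy0(1)] .
      also have "\<dots> = (\<Sum>l\<in>{l\<in>L. x0\<in>l}. i - 1)"
        using all_i[OF C0] xy0(1) by (intro sum.cong) (auto simp: Int_commute)
      also have "\<dots> = r * (i - 1)" using rall xy0(1) CsubP[OF C0] by auto
      finally show ?thesis using assms(11) C0 by simp
    qed
    obtain D where D: "D \<in> \<C>" "D \<noteq> C0"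
      using two_elems[of \<C>] cC C0 by blast
    obtain y where y: "y \<in> D" using cX D by (metis card.empty ex_in_conv not_less_zero)
    have yC: "y \<notin> C0" using disj[OF D(1) C0 D(2)] y by auto
    obtain l1 where l1: "l1 \<in> L" "x0 \<in> l1" "y \<in> l1"
      using ls_ex[OF ls, of x0 y] xy0 CsubP C0 D y yC by blast
    have "C0 \<inter> l1 \<subset> l1" using l1 yC by auto
    then have "card (C0 \<inter> l1) < card l1" using finl[OF l1(1)] by (rule psubset_card_mono[rotated])
    moreover have "card (C0 \<inter> l1) = i" using all_i[OF C0 l1(1)] l1 xy0 by auto
    ultimately have ik: "i < k" using assms(3) l1 by simp
    show False using arith1[OF vr cr vd rk i2 ik c2] .
  qed
  have P2: "c \<notin> spec L \<C>"
  proof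
    assume "c \<in> spec L \<C>"
    then obtain l C where lC: "l \<in> L" "C \<in> \<C>" "card (C \<inter> l) = c" using spec_D by blast
    have "C \<inter> l = C" using lC assms(11) finC[OF lC(2)] by (metis card_subset_eq inf.cobounded1)
    then have Cl: "C \<subseteq> l" by blast
    have contains: "\<exists>D\<in>\<C>. D \<subseteq> m" if mL: "m \<in> L" for m
    proof -
      have lt: "\<forall>l1\<in>L. \<forall>l2\<in>L. \<exists>g\<in>G. g ` l1 = l2" using assms(7) by (simp add: line_transitive_def)
      obtain g where g: "g \<in> G" "g ` l = m" using bspec[OF bspec[OF lt lC(1)] mL] by blast
      have gi: "\<forall>g\<in>G. \<forall>C\<in>\<C>. g ` C \<in> \<C>" using assms(9) by (simp add: G_invariant_def)
      have "g ` C \<in> \<C>" using gi g(1) lC(2) by blast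
      moreover have "g ` C \<subseteq> m" using g(2) Cl by blast
      ultimately show ?thesis by blast
    qed
    define f where "f m = (SOME D. D \<in> \<C> \<and> D \<subseteq> m)" for m
    have fm: "f m \<in> \<C> \<and> f m \<subseteq> m" if "m \<in> L" for m
      unfolding f_def using contains[OF that] by (metis (mono_tags, lifting) someI_ex)
    have "inj_on f L"
    proof
      fix a b assume a: "a \<in> L" and b: "b \<in> L" and e: "f a = f b"
      obtain p q where "p \<in> f a" "q \<in> f a" "p \<noteq> q"
        using two_elems[of "f a"] cX fm[OF a] by blast
      then show "a = b" using ls_uniq[OF ls a b] fm[OF a] fm[OF b] e by blast
    qed
    then have bd: "card L \<le> d" using fm assms(10) card_inj_on_le[of f L \<C>] fC by blast
    have "(\<Sum>l\<in>L. card l) = card L * k" using assms(3) by simp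
    moreover have "(\<Sum>x\<in>P. card {l\<in>L. x\<in>l}) = v * r" using rall assms(2) by simp
    ultimately have "card L * k = v * r" using flags[OF ls] by simp
    then have "d * c * r \<le> d * k" using bd vd by (metis mult_le_mono1)
    moreover have "d > 0" using assms(10) cC by simp
    ultimately have "c * r \<le> k" by (simp add: mult.assoc)
    moreover have "2 * k \<le> c * r" using c2 rk by (simp add: mult_le_mono)
    ultimately show False using assms(4) by simp
  qed
  have P3: "\<forall>h. h \<ge> 2 \<and> spec L \<C> = {1, h} \<longrightarrow> (\<forall>C\<in>\<C>. \<forall>m\<in>induced_lines L C. card m = h)"
  proof (intro allI impI ballI)
    fix h C m assume h: "h \<ge> 2 \<and> spec L \<C> = {1, h}" and C: "C \<in> \<C>" and m: "m \<in> induced_lines L C"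
    then obtain l where l: "l \<in> L" "m = l \<inter> C" "card (l \<inter> C) \<ge> 2" unfolding induced_lines_def by blast
    have "card (C \<inter> l) \<in> spec L \<C>" using in_spec[OF fC C l(1)] l(3) by (simp add: Int_commute)
    then show "card m = h" using h l by (auto simp: Int_commute)
  qed
  show ?thesis using P1 P2 P3 by blast
qed

end
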